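(* Let $\mathcal{T}$ be a stiffly-connected, edge-simple 3-dimensional truss with vertices at points $\mathbf{p}_1,\dots,\mathbf{p}_n$, and let $\mathbf{q}\in\mathbb{R}^{3n}$ be orthogonal to the null space of its stiffness matrix. For each oriented triangle $s=\langle s_1,s_2,s_3\rangle$ of the mesh there exists a (unique) vector $\bar{\mathbf{q}}^{\langle s\rangle}=\mathbf{q}+c^{\langle s\rangle\perp xy}\mathbf{p}^{\perp xy}+c^{\langle s\rangle\perp xz}\mathbf{p}^{\perp xz}+c^{\langle s\rangle\perp yz}\mathbf{p}^{\perp yz}$ with scalars $c^{\langle s\rangle\perp xy},c^{\langle s\rangle\perp xz},c^{\langle s\rangle\perp yz}\in\mathbb{R}$, such that (1) the plane containing the points $\bar{\mathbf{q}}^{\langle s\rangle}_{s_1},\bar{\mathbf{q}}^{\langle s\rangle}_{s_2},\bar{\mathbf{q}}^{\langle s\rangle}_{s_3}$ is parallel to the plane containing $\mathbf{p}_{s_1},\mathbf{p}_{s_2},\mathbf{p}_{s_3}$, and (2) the segment from $\bar{\mathbf{q}}^{\langle s\rangle}_{s_1}$ to $\bar{\mathbf{q}}^{\langle s\rangle}_{s_2}$ is parallel to $\mathbf{p}_{s_1}-\mathbf{p}_{s_2}$.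
   Context: A 3-dimensional truss has $n$ vertices at distinct points $\mathbf{p}_i\in\mathbb{R}^3$, a set of tetrahedra (four vertices each), edges all pairs of vertices sharing a tetrahedron, and positive stiffness coefficients $\gamma(e)$; its stiffness matrix is $\sum_{e=(i,j)}\frac{\gamma(e)}{\|\mathbf{p}_i-\mathbf{p}_j\|_2}\mathbf{b}^{(e)}\mathbf{b}^{(e)\top}$ where $\mathbf{b}^{(e)}\in\mathbb{R}^{3n}$ has block $i$ equal to $(\mathbf{p}_i-\mathbf{p}_j)/\|\mathbf{p}_i-\mathbf{p}_j\|_2$, block $j$ its negative, zeros elsewhere. Edge-simple: tetrahedra form a simplicial complex, each has constant-bounded aspect ratio, and edge lengths and stiffness coefficients are bounded above and below by positive constants. Stiffly-connected: the graph on tetrahedra with adjacency = sharing a triangle face is connected, and for each vertex its restriction to the tetrahedra containing that vertex is connected. For a vector $\mathbf{v}\in\mathbb{R}^{3n}$, $\mathbf{v}_i\in\mathbb{R}^3$ denotes its $i$-th block (coordinates $3i-2,\dots,3i$). Fix an index $c$; define $\mathbf{p}^{\perp xy},\mathbf{p}^{\perp xz},\mathbf{p}^{\perp yz}\in\mathbb{R}^{3n}$ by $\mathbf{p}^{\perp xy}_i=[-(\mathbf{p}_i-\mathbf{p}_c)_y,(\mathbf{p}_i-\mathbf{p}_c)_x,0]^\top$, $\mathbf{p}^{\perp xz}_i=[-(\mathbf{p}_i-\mathbf{p}_c)_z,0,(\mathbf{p}_i-\mathbf{p}_c)_x]^\top$, $\mathbf{p}^{\perp yz}_i=[0,-(\mathbf{p}_i-\mathbf{p}_c)_z,(\mathbf{p}_i-\mathbf{p}_c)_y]^\top$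 (these, together with the three translation vectors, span the null space of the stiffness matrix). An oriented triangle is an ordered triple of vertices forming a triangle face of some tetrahedron. *)

theory Defs
  imports "HOL-Analysis.Analysis"
begin

text \<open>Vertices are the elements of a finite type 'v (so n = CARD('v)); a vector of
  R^(3n) is a function 'v => real^3 (its blocks). Tetrahedra are 4-element vertex sets,
  stiffness coefficients are indexed by edges, i.e. two-element vertex sets.\<close>

definition blk_inner :: "('v::finite \<Rightarrow> real^3) \<Rightarrow> ('v \<Rightarrow> real^3) \<Rightarrow> real" where
  "blk_inner u w = (\<Sum>k\<in>UNIV. u k \<bullet> w k)"

definition truss_edges :: "'v set set \<Rightarrow> ('v \<times> 'v) set" where
  "truss_edges T = {(i, j). i \<noteq> j \<and> (\<exists>t\<in>T. i \<in> t \<and> j \<in> t)}"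

definition bvec :: "('v \<Rightarrow> real^3) \<Rightarrow> 'v \<Rightarrow> 'v \<Rightarrow> ('v \<Rightarrow> real^3)" where
  "bvec p i j = (\<lambda>k. if k = i then (1 / norm (p i - p j)) *\<^sub>R (p i - p j)
                     else if k = j then - ((1 / norm (p i - p j)) *\<^sub>R (p i - p j))
                     else 0)"

text \<open>Stiffness matrix applied to v: sum over unordered edges e={i,j} of
  gamma(e)/|p_i-p_j| * b_e b_e^T v; written as half the sum over ordered pairs
  (b_(i,j) b_(i,j)^T = b_(j,i) b_(j,i)^T).\<close>
definition stiffness_apply ::
  "('v::finite \<Rightarrow> real^3) \<Rightarrow> 'v set set \<Rightarrow> ('v set \<Rightarrow> real) \<Rightarrow> ('v \<Rightarrow> real^3) \<Rightarrow> ('v \<Rightarrow> real^3)" where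
  "stiffness_apply p T \<gamma> v = (\<lambda>k. (1/2) *\<^sub>R
      (\<Sum>(i, j)\<in>truss_edges T.
         (\<gamma> {i, j} / norm (p i - p j) * blk_inner (bvec p i j) v) *\<^sub>R bvec p i j k))"

definition stiffness_null_space ::
  "('v::finite \<Rightarrow> real^3) \<Rightarrow> 'v set set \<Rightarrow> ('v set \<Rightarrow> real) \<Rightarrow> ('v \<Rightarrow> real^3) set" where
  "stiffness_null_space p T \<gamma> = {v. stiffness_apply p T \<gamma> v = (\<lambda>_. 0)}"

text \<open>Edge-simple (for a single truss): vertices at distinct points, every vertex in some
  tetrahedron, tetrahedra are non-degenerate 4-sets forming a geometric simplicial complex,
  positive stiffness coefficients. (The constant bounds on aspect ratio, edge lengths and
  stiffnesses hold automatically for a single finite truss with these properties.)\<close>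
definition edge_simple :: "('v::finite \<Rightarrow> real^3) \<Rightarrow> 'v set set \<Rightarrow> ('v set \<Rightarrow> real) \<Rightarrow> bool" where
  "edge_simple p T \<gamma> \<longleftrightarrow>
     inj p \<and> \<Union>T = UNIV \<and>
     (\<forall>t\<in>T. card t = 4 \<and> \<not> affine_dependent (p ` t)) \<and>
     (\<forall>t1\<in>T. \<forall>t2\<in>T. convex hull (p ` t1) \<inter> convex hull (p ` t2) = convex hull (p ` (t1 \<inter> t2))) \<and>
     (\<forall>i j. (i, j) \<in> truss_edges T \<longrightarrow> \<gamma> {i, j} > 0)"

definition face_adj :: "'v set set \<Rightarrow> ('v set \<times> 'v set) set" where
  "face_adj S = {(a, b). a \<in> S \<and> b \<in> S \<and> card (a \<inter> b) = 3}"

definition stiffly_connected :: "'v set set \<Rightarrow> bool" where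
  "stiffly_connected T \<longleftrightarrow>
     (\<forall>a\<in>T. \<forall>b\<in>T. (a, b) \<in> (face_adj T)\<^sup>*) \<and>
     (\<forall>v. \<forall>a\<in>{t\<in>T. v \<in> t}. \<forall>b\<in>{t\<in>T. v \<in> t}. (a, b) \<in> (face_adj {t\<in>T. v \<in> t})\<^sup>*)"

definition oriented_triangle :: "'v set set \<Rightarrow> 'v \<Rightarrow> 'v \<Rightarrow> 'v \<Rightarrow> bool" where
  "oriented_triangle T s1 s2 s3 \<longleftrightarrow>
     s1 \<noteq> s2 \<and> s1 \<noteq> s3 \<and> s2 \<noteq> s3 \<and> (\<exists>t\<in>T. {s1, s2, s3} \<subseteq> t)"

definition p_perp_xy :: "('v \<Rightarrow> real^3) \<Rightarrow> 'v \<Rightarrow> ('v \<Rightarrow> real^3)" where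
  "p_perp_xy p c = (\<lambda>i. vector [- (p i - p c)$2, (p i - p c)$1, 0])"
definition p_perp_xz :: "('v \<Rightarrow> real^3) \<Rightarrow> 'v \<Rightarrow> ('v \<Rightarrow> real^3)" where
  "p_perp_xz p c = (\<lambda>i. vector [- (p i - p c)$3, 0, (p i - p c)$1])"
definition p_perp_yz :: "('v \<Rightarrow> real^3) \<Rightarrow> 'v \<Rightarrow> ('v \<Rightarrow> real^3)" where
  "p_perp_yz p c = (\<lambda>i. vector [0, - (p i - p c)$3, (p i - p c)$2])"

definition planes_parallel :: "real^3 \<Rightarrow> real^3 \<Rightarrow> real^3 \<Rightarrow> real^3 \<Rightarrow> real^3 \<Rightarrow> real^3 \<Rightarrow> bool" where
  "planes_parallel a1 a2 a3 b1 b2 b3 \<longleftrightarrow>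
     (\<exists>d. affine hull {a1, a2, a3} \<subseteq> (\<lambda>x. d + x) ` (affine hull {b1, b2, b3}))"

definition segment_parallel :: "real^3 \<Rightarrow> real^3 \<Rightarrow> real^3 \<Rightarrow> bool" where
  "segment_parallel a1 a2 w \<longleftrightarrow> (\<exists>t::real. a2 - a1 = t *\<^sub>R w)"

end

theory Submission
  imports Defs
begin

lemma rot_eq:
  "cxy *\<^sub>R p_perp_xy p c i + cxz *\<^sub>R p_perp_xz p c i + cyz *\<^sub>R p_perp_yz p c i
   = cross3 (vector [cyz, -cxz, cxy]) (p i - p c)"
  by (simp add: p_perp_xy_def p_perp_xz_def p_perp_yz_def cross3_def vec_eq_iff forall_3 vector_3 algebra_simps)

lemma plane_dot:
  fixes b1 b2 b3 :: "real^3"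
  assumes "x \<in> affine hull {b1,b2,b3}"
  shows "(x - b1) \<bullet> cross3 (b2-b1) (b3-b1) = 0"
proof -
  obtain u v w where x: "x = u *\<^sub>R b1 + v *\<^sub>R b2 + w *\<^sub>R b3" and s: "u+v+w=1"
    using assms by (auto simp: affine_hull_3)
  have "x - b1 = v *\<^sub>R (b2-b1) + w *\<^sub>R (b3-b1)"
    using s unfolding x by (simp add: algebra_simps) (metis scaleR_left_distrib scaleR_one s)
  then show ?thesis by (simp add: inner_add_left dot_cross_self)
qed

lemma decomp:
  fixes x d1 d2 :: "real^3"
  shows "(cross3 d1 d2 \<bullet> cross3 d1 d2) *\<^sub>R x = ((cross3 x d2) \<bullet> cross3 d1 d2) *\<^sub>R d1 + ((cross3 d1 x) \<bullet> cross3 d1 d2) *\<^sub>R d2 + (x \<bullet> cross3 d1 d2) *\<^sub>R cross3 d1 d2"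
  by (simp add: cross3_simps forall_3 vector_3)

lemma pp_dest:
  assumes "planes_parallel a1 a2 a3 b1 b2 b3"
  shows "(a2 - a1) \<bullet> cross3 (b2-b1) (b3-b1) = 0 \<and> (a3 - a1) \<bullet> cross3 (b2-b1) (b3-b1) = 0"
proof -
  obtain d where d: "affine hull {a1, a2, a3} \<subseteq> (\<lambda>x. d + x) ` (affine hull {b1, b2, b3})"
    using assms unfolding planes_parallel_def by blast
  have "\<And>a. a \<in> {a1,a2,a3} \<Longrightarrow> (a - d - b1) \<bullet> cross3 (b2-b1) (b3-b1) = 0"
  proof -
    fix a assume "a \<in> {a1,a2,a3}"
    hence "a \<in> affine hull {a1,a2,a3}" by (rule hull_inc)
    with d obtain x where "x \<in> affine hull {b1,b2,b3}" "a = d + x" by blast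
    thus "(a - d - b1) \<bullet> cross3 (b2-b1) (b3-b1) = 0" using plane_dot by simp
  qed
  hence "(a1 - d - b1) \<bullet> cross3 (b2-b1) (b3-b1) = 0" "(a2 - d - b1) \<bullet> cross3 (b2-b1) (b3-b1) = 0"
     "(a3 - d - b1) \<bullet> cross3 (b2-b1) (b3-b1) = 0" by auto
  hence "(a2 - d - b1) \<bullet> cross3 (b2-b1) (b3-b1) - (a1 - d - b1) \<bullet> cross3 (b2-b1) (b3-b1) = 0"
     "(a3 - d - b1) \<bullet> cross3 (b2-b1) (b3-b1) - (a1 - d - b1) \<bullet> cross3 (b2-b1) (b3-b1) = 0" by auto
  thus ?thesis by (simp only: inner_diff_left[symmetric]) (simp add: algebra_simps)
qed

lemma pp_intro:
  fixes a1 a2 a3 b1 b2 b3 :: "real^3"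
  assumes n: "cross3 (b2-b1) (b3-b1) \<noteq> 0"
    and h2: "(a2 - a1) \<bullet> cross3 (b2-b1) (b3-b1) = 0" and h3: "(a3 - a1) \<bullet> cross3 (b2-b1) (b3-b1) = 0"
  shows "planes_parallel a1 a2 a3 b1 b2 b3"
  unfolding planes_parallel_def
proof (intro exI subsetI)
  define n where "n = cross3 (b2-b1) (b3-b1)"
  have N: "n \<bullet> n \<noteq> 0" using n n_def by simp
  fix y assume "y \<in> affine hull {a1,a2,a3}"
  then obtain u v w where y: "y = u *\<^sub>R a1 + v *\<^sub>R a2 + w *\<^sub>R a3" and s: "u+v+w=1"
    by (auto simp: affine_hull_3)
  define z where "z = y - (a1 - b1)"
  have zb: "z - b1 = v *\<^sub>R (a2-a1) + w *\<^sub>R (a3-a1)"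
    using s unfolding z_def y by (simp add: algebra_simps) (metis scaleR_left_distrib scaleR_one s)
  have zn: "(z - b1) \<bullet> n = 0" using h2 h3 unfolding zb n_def by (simp add: inner_add_left)
  define al where "al = (cross3 (z - b1) (b3-b1) \<bullet> n) / (n \<bullet> n)"
  define be where "be = (cross3 (b2-b1) (z - b1) \<bullet> n) / (n \<bullet> n)"
  have "(n \<bullet> n) *\<^sub>R (z - b1) = (n \<bullet> n) *\<^sub>R (al *\<^sub>R (b2-b1) + be *\<^sub>R (b3-b1))"
    using decomp[of "b2-b1" "b3-b1" "z - b1"] zn N unfolding n_def al_def be_def
    by (simp add: scaleR_add_right)
  hence "z - b1 = al *\<^sub>R (b2-b1) + be *\<^sub>R (b3-b1)" using N by simp
  hence "z = (1 - al - be) *\<^sub>R b1 + al *\<^sub>R b2 + be *\<^sub>R b3"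
    by (simp add: algebra_simps)
  hence "z \<in> affine hull {b1,b2,b3}"
    apply (simp add: affine_hull_3)
    apply (rule exI[of _ "1 - al - be"], rule exI[of _ al], rule exI[of _ be])
    by simp
  moreover have "y = (a1 - b1) + z" by (simp add: z_def)
  ultimately show "y \<in> (\<lambda>x. (a1 - b1) + x) ` (affine hull {b1, b2, b3})" by blast
qed


lemma cc1: "cross3 (cross3 e d) d = (e \<bullet> d) *\<^sub>R d - (d \<bullet> d) *\<^sub>R e"
  by (simp add: cross3_simps forall_3 vector_3)

lemma cc2: "cross3 d (cross3 x d) = (d \<bullet> d) *\<^sub>R x - (d \<bullet> x) *\<^sub>R d"
  by (simp add: cross3_simps forall_3 vector_3)

lemma core_exists:
  fixes e1 e2 d1 d2 :: "real^3"
  assumes n: "cross3 d1 d2 \<noteq> 0" and d1: "d1 \<noteq> 0"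
  shows "\<exists>w. (\<exists>t. e1 + cross3 w d1 = t *\<^sub>R d1) \<and> (e2 + cross3 w d2) \<bullet> cross3 d1 d2 = 0"
proof -
  define n where "n = cross3 d1 d2"
  define w0 where "w0 = (1/(d1 \<bullet> d1)) *\<^sub>R cross3 e1 d1"
  define l where "l = - ((e2 + cross3 w0 d2) \<bullet> n) / (n \<bullet> n)"
  define w where "w = w0 + l *\<^sub>R d1"
  have N1: "d1 \<bullet> d1 \<noteq> 0" using d1 by simp
  have N: "n \<bullet> n \<noteq> 0" using n n_def by simp
  have "e1 + cross3 w d1 = ((e1 \<bullet> d1)/(d1 \<bullet> d1)) *\<^sub>R d1"
    using N1 by (simp add: w_def w0_def cross_add_left cross_mult_left cc1 algebra_simps)
  moreover have "(e2 + cross3 w d2) \<bullet> n = 0"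
  proof -
    have "(e2 + cross3 w d2) \<bullet> n = (e2 + cross3 w0 d2) \<bullet> n + l * (n \<bullet> n)"
      by (simp add: w_def cross_add_left cross_mult_left n_def inner_add_left)
    also have "\<dots> = 0" using N by (simp add: l_def)
    finally show ?thesis .
  qed
  ultimately show ?thesis unfolding n_def by blast
qed

lemma core_unique:
  fixes e1 e2 d1 d2 w w' :: "real^3"
  assumes n: "cross3 d1 d2 \<noteq> 0" and d1: "d1 \<noteq> 0"
    and a: "e1 + cross3 w d1 = t *\<^sub>R d1" and a': "e1 + cross3 w' d1 = t' *\<^sub>R d1"
    and b: "(e2 + cross3 w d2) \<bullet> cross3 d1 d2 = 0" and b': "(e2 + cross3 w' d2) \<bullet> cross3 d1 d2 = 0"
  shows "w = w'"
proof -
  define n where "n = cross3 d1 d2"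
  define dd where "dd = w - w'"
  have N1: "d1 \<bullet> d1 \<noteq> 0" using d1 by simp
  have N: "n \<bullet> n \<noteq> 0" using n n_def by simp
  have x1: "cross3 dd d1 = (t - t') *\<^sub>R d1"
  proof -
    have "cross3 dd d1 = (e1 + cross3 w d1) - (e1 + cross3 w' d1)"
      by (simp add: dd_def Cross3.left_diff_distrib)
    also have "\<dots> = (t - t') *\<^sub>R d1" using a a' by (simp add: scaleR_diff_left)
    finally show ?thesis .
  qed
  have "d1 \<bullet> cross3 dd d1 = 0" by (simp add: dot_cross_self)
  hence "(t - t') * (d1 \<bullet> d1) = 0" using x1 by simp
  hence "t = t'" using N1 by simp
  hence x0: "cross3 dd d1 = 0" using x1 by simp
  have y0: "cross3 dd d2 \<bullet> n = 0"
    using b b' by (simp add: dd_def Cross3.left_diff_distrib inner_diff_left n_def inner_add_left)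
  have z: "(d1 \<bullet> d1) *\<^sub>R dd = (d1 \<bullet> dd) *\<^sub>R d1"
    using cc2[of d1 dd] x0 by simp
  have "(d1 \<bullet> d1) * (cross3 dd d2 \<bullet> n) = cross3 ((d1 \<bullet> d1) *\<^sub>R dd) d2 \<bullet> n"
    by (simp add: cross_mult_left)
  also have "\<dots> = (d1 \<bullet> dd) * (n \<bullet> n)" by (simp add: z cross_mult_left n_def)
  finally have "d1 \<bullet> dd = 0" using y0 N by simp
  hence "(d1 \<bullet> d1) *\<^sub>R dd = 0" using z by simp
  hence "dd = 0" using N1 by simp
  thus ?thesis by (simp add: dd_def)
qed
lemma qb_form:
  "(\<lambda>i. q i + cxy *\<^sub>R p_perp_xy p c i + cxz *\<^sub>R p_perp_xz p c i + cyz *\<^sub>R p_perp_yz p c i)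
   = (\<lambda>i. q i + cross3 (vector [cyz, -cxz, cxy]) (p i - p c))"
proof (rule ext)
  fix i
  have "q i + cxy *\<^sub>R p_perp_xy p c i + cxz *\<^sub>R p_perp_xz p c i + cyz *\<^sub>R p_perp_yz p c i
     = q i + (cxy *\<^sub>R p_perp_xy p c i + cxz *\<^sub>R p_perp_xz p c i + cyz *\<^sub>R p_perp_yz p c i)"
    by (simp only: add.assoc)
  then show "q i + cxy *\<^sub>R p_perp_xy p c i + cxz *\<^sub>R p_perp_xz p c i + cyz *\<^sub>R p_perp_yz p c i
     = q i + cross3 (vector [cyz, -cxz, cxy]) (p i - p c)" by (simp only: rot_eq)
qed

lemma ex_flip: fixes X a b :: "real^3" shows "(\<exists>t::real. X = t *\<^sub>R (a - b)) \<longleftrightarrow> (\<exists>t. X = t *\<^sub>R (b - a))"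
proof
  assume "\<exists>t::real. X = t *\<^sub>R (a - b)"
  then obtain t where "X = t *\<^sub>R (a - b)" by blast
  hence "X = (-t) *\<^sub>R (b - a)" by (metis minus_diff_eq scaleR_minus_left scaleR_minus_right)
  thus "\<exists>t. X = t *\<^sub>R (b - a)" by blast
next
  assume "\<exists>t::real. X = t *\<^sub>R (b - a)"
  then obtain t where "X = t *\<^sub>R (b - a)" by blast
  hence "X = (-t) *\<^sub>R (a - b)" by (metis minus_diff_eq scaleR_minus_left scaleR_minus_right)
  thus "\<exists>t. X = t *\<^sub>R (a - b)" by blast
qed

lemma char:
  fixes p q :: "'v \<Rightarrow> real^3"
  assumes qb: "qb = (\<lambda>i. q i + cross3 w (p i - p c))"
    and n: "cross3 (p s2 - p s1) (p s3 - p s1) \<noteq> 0"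
  shows "(planes_parallel (qb s1) (qb s2) (qb s3) (p s1) (p s2) (p s3)
           \<and> segment_parallel (qb s1) (qb s2) (p s1 - p s2)) \<longleftrightarrow>
         ((\<exists>t. (q s2 - q s1) + cross3 w (p s2 - p s1) = t *\<^sub>R (p s2 - p s1)) \<and>
          ((q s3 - q s1) + cross3 w (p s3 - p s1)) \<bullet> cross3 (p s2 - p s1) (p s3 - p s1) = 0)"
proof -
  have D: "qb j - qb i = (q j - q i) + cross3 w (p j - p i)" for i j
    by (simp add: qb Cross3.right_diff_distrib algebra_simps)
  have S: "segment_parallel (qb s1) (qb s2) (p s1 - p s2) \<longleftrightarrow>
     (\<exists>t. (q s2 - q s1) + cross3 w (p s2 - p s1) = t *\<^sub>R (p s2 - p s1))"
    unfolding segment_parallel_def D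
    by (rule ex_flip)
  show ?thesis
  proof
    assume h: "planes_parallel (qb s1) (qb s2) (qb s3) (p s1) (p s2) (p s3)
           \<and> segment_parallel (qb s1) (qb s2) (p s1 - p s2)"
    then show "(\<exists>t. (q s2 - q s1) + cross3 w (p s2 - p s1) = t *\<^sub>R (p s2 - p s1)) \<and>
          ((q s3 - q s1) + cross3 w (p s3 - p s1)) \<bullet> cross3 (p s2 - p s1) (p s3 - p s1) = 0"
      using S pp_dest[of "qb s1" "qb s2" "qb s3" "p s1" "p s2" "p s3"] D by auto
  next
    assume h: "(\<exists>t. (q s2 - q s1) + cross3 w (p s2 - p s1) = t *\<^sub>R (p s2 - p s1)) \<and>
          ((q s3 - q s1) + cross3 w (p s3 - p s1)) \<bullet> cross3 (p s2 - p s1) (p s3 - p s1) = 0"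
    then obtain t where t: "(q s2 - q s1) + cross3 w (p s2 - p s1) = t *\<^sub>R (p s2 - p s1)" by blast
    have "(qb s2 - qb s1) \<bullet> cross3 (p s2 - p s1) (p s3 - p s1) = 0"
      unfolding D t by (simp add: dot_cross_self)
    moreover have "(qb s3 - qb s1) \<bullet> cross3 (p s2 - p s1) (p s3 - p s1) = 0"
      unfolding D using h by simp
    ultimately have "planes_parallel (qb s1) (qb s2) (qb s3) (p s1) (p s2) (p s3)"
      using pp_intro n by blast
    thus "planes_parallel (qb s1) (qb s2) (qb s3) (p s1) (p s2) (p s3)
           \<and> segment_parallel (qb s1) (qb s2) (p s1 - p s2)" using S h by blast
  qed
qed

theorem lemma4p1:
  fixes p :: "'v::finite \<Rightarrow> real^3"
    and T :: "'v set set"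
    and \<gamma> :: "'v set \<Rightarrow> real"
    and c :: 'v
    and q :: "'v \<Rightarrow> real^3"
    and s1 s2 s3 :: 'v
  assumes "edge_simple p T \<gamma>"
    and "stiffly_connected T"
    and "\<forall>v\<in>stiffness_null_space p T \<gamma>. blk_inner q v = 0"
    and "oriented_triangle T s1 s2 s3"
  shows "\<exists>!qb. (\<exists>cxy cxz cyz :: real.
              qb = (\<lambda>i. q i + cxy *\<^sub>R p_perp_xy p c i + cxz *\<^sub>R p_perp_xz p c i
                          + cyz *\<^sub>R p_perp_yz p c i))
           \<and> planes_parallel (qb s1) (qb s2) (qb s3) (p s1) (p s2) (p s3)
           \<and> segment_parallel (qb s1) (qb s2) (p s1 - p s2)"
proof -
  obtain t where t: "t \<in> T" "{s1,s2,s3} \<subseteq> t" and ds: "s1 \<noteq> s2" "s1 \<noteq> s3" "s2 \<noteq> s3"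
    using assms(4) unfolding oriented_triangle_def by blast
  have inj: "inj p" and ai: "\<not> affine_dependent (p ` t)"
    using assms(1) t(1) unfolding edge_simple_def by auto
  have ai3: "\<not> affine_dependent {p s1, p s2, p s3}"
    using affine_independent_subset[OF ai] t(2) by auto
  have dp: "p s1 \<noteq> p s2" "p s1 \<noteq> p s3" "p s2 \<noteq> p s3" using inj ds by (auto dest: injD)
  have "\<not> collinear {p s2, p s1, p s3}"
    using ai3 dp collinear_3_eq_affine_dependent[of "p s2" "p s1" "p s3"] by (auto simp: insert_commute)
  hence "\<not> collinear {0, p s2 - p s1, p s3 - p s1}"
    using collinear_3[of "p s2" "p s1" "p s3"] by simp
  hence n: "cross3 (p s2 - p s1) (p s3 - p s1) \<noteq> 0" by (simp add: cross_eq_0)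
  have d1: "p s2 - p s1 \<noteq> 0" using dp by simp
  let ?P = "\<lambda>qb. planes_parallel (qb s1) (qb s2) (qb s3) (p s1) (p s2) (p s3)
           \<and> segment_parallel (qb s1) (qb s2) (p s1 - p s2)"
  have form: "(\<exists>cxy cxz cyz :: real.
              qb = (\<lambda>i. q i + cxy *\<^sub>R p_perp_xy p c i + cxz *\<^sub>R p_perp_xz p c i
                          + cyz *\<^sub>R p_perp_yz p c i)) \<longleftrightarrow> (\<exists>w. qb = (\<lambda>i. q i + cross3 w (p i - p c)))" for qb
  proof
    assume "\<exists>cxy cxz cyz :: real.
              qb = (\<lambda>i. q i + cxy *\<^sub>R p_perp_xy p c i + cxz *\<^sub>R p_perp_xz p c i
                          + cyz *\<^sub>R p_perp_yz p c i)"
    thus "\<exists>w. qb = (\<lambda>i. q i + cross3 w (p i - p c))" using qb_form by metis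
  next
    assume "\<exists>w. qb = (\<lambda>i. q i + cross3 w (p i - p c))"
    then obtain w where w: "qb = (\<lambda>i. q i + cross3 w (p i - p c))" by blast
    have "vector [w$1, - (- w$2), w$3] = w" by (simp add: vec_eq_iff forall_3 vector_3)
    hence "qb = (\<lambda>i. q i + (w$3) *\<^sub>R p_perp_xy p c i + (- w$2) *\<^sub>R p_perp_xz p c i
                          + (w$1) *\<^sub>R p_perp_yz p c i)"
      using w qb_form[of q "w$3" p c "- w$2" "w$1"] by simp
    thus "\<exists>cxy cxz cyz :: real.
              qb = (\<lambda>i. q i + cxy *\<^sub>R p_perp_xy p c i + cxz *\<^sub>R p_perp_xz p c i
                          + cyz *\<^sub>R p_perp_yz p c i)" by blast
  qed
  show ?thesis
    unfolding form
  proof -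
    obtain w where w: "(\<exists>t. (q s2 - q s1) + cross3 w (p s2 - p s1) = t *\<^sub>R (p s2 - p s1))"
       "((q s3 - q s1) + cross3 w (p s3 - p s1)) \<bullet> cross3 (p s2 - p s1) (p s3 - p s1) = 0"
      using core_exists[OF n d1] by blast
    let ?qb = "\<lambda>i. q i + cross3 w (p i - p c)"
    have ex: "?P ?qb" using char[of ?qb q w p c s2 s1 s3] n w by blast
    have un: "qb = ?qb" if h1: "\<exists>w. qb = (\<lambda>i. q i + cross3 w (p i - p c))" and h2: "?P qb" for qb
    proof -
      obtain w' where w': "qb = (\<lambda>i. q i + cross3 w' (p i - p c))" using h1 by blast
      have "(\<exists>t. (q s2 - q s1) + cross3 w' (p s2 - p s1) = t *\<^sub>R (p s2 - p s1)) \<and>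
          ((q s3 - q s1) + cross3 w' (p s3 - p s1)) \<bullet> cross3 (p s2 - p s1) (p s3 - p s1) = 0"
        using char[OF w' n] h2 by blast
      then have "w' = w" using core_unique[OF n d1] w by blast
      thus ?thesis using w' by simp
    qed
    show "\<exists>!qb. (\<exists>w. qb = (\<lambda>i. q i + cross3 w (p i - p c))) \<and> ?P qb"
      using ex un by (intro ex1I[of _ ?qb]) blast+
  qed
qed
end
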